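(* There is an absolute constant $C$ such that for every alphabet $\Sigma$ of size $\sigma\ge 2$, every positive integer $d$, and every string $T$ over $\Sigma$ of length $n>d$, $\mathcal{S}(T,d)\le C\,d(n-d)$, i.e., $\mathcal{S}(T,d)\in O(d(n-d))$. This upper bound is tight when $\sigma\ge d+1$: there is an absolute constant $c>0$ such that for all integers $d,n,\sigma$ with $1\le d\le\sigma-1$ and $n>d$, there exists a string $T'$ of length $n$ over an alphabet of size $\sigma$ with $\mathcal{S}(T',d)\ge c\,d(n-d)$.
   Context: For a string $S$ over alphabet $\Sigma$, a string $w\in\Sigma^*$ is a minimal absent word (MAW) of $S$ if $w$ does not occur in $S$ but every proper substring of $w$ (including the empty string) occurs in $S$; $\mathsf{MAW}(S)$ is the set of all MAWs of $S$. $T[a..b]$ denotes the substring of $T$ from position $a$ to $b$. For a string $T$ of length $n>d$, $\mathcal{S}(T,d)=\sum_{i=1}^{n-d}|\mathsf{MAW}(T[i..i+d-1])\bigtriangleup\mathsf{MAW}(T[i+1..i+d])|$, where $\bigtriangleup$ is symmetric difference. *)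

theory Defs
  imports Complex_Main "HOL-Library.Sublist"
begin

text \<open>Strings are lists; "occurs in" means contiguous substring (Sublist.sublist).
  Alphabet Sigma is a finite set; strings over Sigma are lists with elements in Sigma.\<close>

definition MAW :: "'a set \<Rightarrow> 'a list \<Rightarrow> 'a list set" where
  "MAW \<Sigma> S = {w. set w \<subseteq> \<Sigma> \<and> \<not> sublist w S \<and>
                  (\<forall>u. sublist u w \<and> u \<noteq> w \<longrightarrow> sublist u S)}"

definition symdiff :: "'a set \<Rightarrow> 'a set \<Rightarrow> 'a set" where
  "symdiff A B = (A - B) \<union> (B - A)"

text \<open>T[i..i+d-1] (1-indexed) is take d (drop (i-1) T); the sum over i = 1..n-d is
  rendered 0-indexed over i < n - d.\<close>
definition S_MAW :: "'a set \<Rightarrow> 'a list \<Rightarrow> nat \<Rightarrow> nat" where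
  "S_MAW \<Sigma> T d = (\<Sum>i<length T - d.
      card (symdiff (MAW \<Sigma> (take d (drop i T))) (MAW \<Sigma> (take d (drop (Suc i) T)))))"

end

theory Submission imports Defs begin

lemma proper_sublist_cases:
  assumes "sublist u w" "u \<noteq> w"
  shows "sublist u (butlast w) \<or> sublist u (tl w)"
proof -
  obtain p s where w: "w = p @ u @ s" using assms(1) by (auto simp: sublist_def)
  show ?thesis
  proof (cases "s = []")
    case True
    then have "p \<noteq> []" using assms(2) w by auto
    then have "tl w = tl p @ u @ s" using w by (cases p) auto
    then show ?thesis by (auto simp: sublist_def)
  next
    case False
    then have "butlast w = p @ u @ butlast s" using w by (simp add: butlast_append)
    then show ?thesis by (auto simp: sublist_def)
  qed
qed

lemma Nil_notin_MAW: "[] \<notin> MAW \<Sigma> S"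
  by (auto simp: MAW_def)

lemma MAW_char:
  assumes "w \<noteq> []"
  shows "w \<in> MAW \<Sigma> S \<longleftrightarrow> set w \<subseteq> \<Sigma> \<and> \<not> sublist w S \<and> sublist (butlast w) S \<and> sublist (tl w) S"
proof
  assume "w \<in> MAW \<Sigma> S"
  moreover have "butlast w \<noteq> w" using assms by (cases w rule: rev_cases) auto
  moreover have "tl w \<noteq> w" using assms by (cases w) auto
  ultimately show "set w \<subseteq> \<Sigma> \<and> \<not> sublist w S \<and> sublist (butlast w) S \<and> sublist (tl w) S"
    by (auto simp: MAW_def)
next
  assume h: "set w \<subseteq> \<Sigma> \<and> \<not> sublist w S \<and> sublist (butlast w) S \<and> sublist (tl w) S"
  show "w \<in> MAW \<Sigma> S"
    unfolding MAW_def using h proper_sublist_cases sublist_order.order_trans by blast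
qed

lemma MAW_finite:
  assumes "finite \<Sigma>"
  shows "finite (MAW \<Sigma> S)"
proof -
  have "MAW \<Sigma> S \<subseteq> {w. set w \<subseteq> \<Sigma> \<and> length w \<le> Suc (length S)}"
  proof
    fix w assume w: "w \<in> MAW \<Sigma> S"
    then have "w \<noteq> []" using Nil_notin_MAW by metis
    then have "sublist (tl w) S" "set w \<subseteq> \<Sigma>" using w MAW_char by blast+
    then show "w \<in> {w. set w \<subseteq> \<Sigma> \<and> length w \<le> Suc (length S)}"
      using sublist_length_le by fastforce
  qed
  then show ?thesis using finite_subset finite_lists_length_le[OF assms] by blast
qed

lemma sublist_single: "sublist [y] S \<longleftrightarrow> y \<in> set S"
  by (auto simp: sublist_def in_set_conv_decomp)

lemma MAW_rev: "MAW \<Sigma> (rev S) = rev ` MAW \<Sigma> S"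
proof -
  have "w \<in> MAW \<Sigma> (rev S) \<longleftrightarrow> rev w \<in> MAW \<Sigma> S" for w
  proof (cases "w = []")
    case True then show ?thesis by (simp add: Nil_notin_MAW)
  next
    case False
    then have "rev w \<noteq> []" by simp
    have e1: "butlast (rev w) = rev (tl w)" by (simp add: butlast_rev)
    have e2: "tl (rev w) = rev (butlast w)" by (metis butlast_rev rev_rev_ident)
    show ?thesis unfolding MAW_char[OF False] MAW_char[OF \<open>rev w \<noteq> []\<close>] e1 e2
      by (auto simp: sublist_rev_left)
  qed
  then show ?thesis by (auto simp: image_iff) (metis rev_rev_ident)
qed

lemma card_symdiff_image:
  assumes "inj f"
  shows "card (symdiff (f ` A) (f ` B)) = card (symdiff A B)"
proof -
  have "symdiff (f ` A) (f ` B) = f ` symdiff A B"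
    unfolding symdiff_def using assms by (simp add: image_Un image_set_diff)
  then show ?thesis using assms by (simp add: card_image inj_on_subset)
qed

lemma symdiff_commute: "symdiff A B = symdiff B A"
  by (auto simp: symdiff_def)


lemma snoc_bound:
  assumes fin: "finite \<Sigma>"
  shows "card (symdiff (MAW \<Sigma> S) (MAW \<Sigma> (S @ [b]))) \<le> 3 * length S + 4"
proof -
  let ?S' = "S @ [b]"
  define D1 where "D1 = MAW \<Sigma> S - MAW \<Sigma> ?S'"
  define A where "A = {w \<in> MAW \<Sigma> ?S' - MAW \<Sigma> S. sublist (butlast w) S}"
  define B where "B = {w \<in> MAW \<Sigma> ?S' - MAW \<Sigma> S. \<not> sublist (butlast w) S}"
  have sd: "symdiff (MAW \<Sigma> S) (MAW \<Sigma> ?S') = D1 \<union> (A \<union> B)"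
    unfolding symdiff_def D1_def A_def B_def by blast
  have finD1: "finite D1" and finA: "finite A" and finB: "finite B"
    using MAW_finite[OF fin] unfolding D1_def A_def B_def by auto
  have "D1 \<subseteq> set (suffixes ?S')"
  proof
    fix w assume w: "w \<in> D1"
    then have "w \<noteq> []" unfolding D1_def using Nil_notin_MAW by blast
    from w have m: "w \<in> MAW \<Sigma> S" "w \<notin> MAW \<Sigma> ?S'" unfolding D1_def by auto
    then have "set w \<subseteq> \<Sigma>" "\<not> sublist w S" "sublist (butlast w) S" "sublist (tl w) S"
      using MAW_char[OF \<open>w \<noteq> []\<close>] by auto
    then have "sublist w ?S'"
      using m(2) MAW_char[OF \<open>w \<noteq> []\<close>, of \<Sigma> ?S'] by (auto simp: sublist_snoc)
    then show "w \<in> set (suffixes ?S')" using \<open>\<not> sublist w S\<close> by (auto simp: sublist_snoc)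
  qed
  then have "card D1 \<le> card (set (suffixes ?S'))" by (intro card_mono) simp_all
  also have "\<dots> \<le> length (suffixes ?S')" by (rule card_length)
  finally have cD1: "card D1 \<le> length S + 2" by simp
  have Bprops: "w \<noteq> [] \<and> suffix (butlast w) ?S' \<and> \<not> sublist (butlast w) S \<and> sublist (tl (butlast w)) S
      \<and> sublist (tl w) ?S' \<and> \<not> sublist w ?S'" if w: "w \<in> B" for w
  proof -
    have "w \<noteq> []" using w Nil_notin_MAW unfolding B_def by blast
    have m: "set w \<subseteq> \<Sigma>" "\<not> sublist w ?S'" "sublist (butlast w) ?S'" "sublist (tl w) ?S'"
      using w MAW_char[OF \<open>w \<noteq> []\<close>] unfolding B_def by auto
    have nb: "\<not> sublist (butlast w) S" using w unfolding B_def by auto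
    then have sb: "suffix (butlast w) ?S'" using m(3) by (auto simp: sublist_snoc)
    have "sublist (tl (butlast w)) S"
    proof -
      have tb: "tl (butlast w) = butlast (tl w)" by (simp add: butlast_tl)
      show ?thesis
      proof (cases "sublist (tl w) S")
        case True then show ?thesis unfolding tb using sublist_butlast sublist_order.order_trans by blast
      next
        case False
        then have "suffix (tl w) ?S'" using m(4) by (auto simp: sublist_snoc)
        then have "tl w = [] \<or> (\<exists>zs. tl w = zs @ [b] \<and> suffix zs S)" by simp
        then show ?thesis unfolding tb by auto
      qed
    qed
    then show ?thesis using \<open>w \<noteq> []\<close> sb nb m by blast
  qed
  have Buniq: "butlast w1 = butlast w2" if "w1 \<in> B" "w2 \<in> B" for w1 w2
  proof -
    have key: "u1 = u2" if s1: "suffix u1 ?S'" and s2: "suffix u2 ?S'" and su: "suffix u1 u2"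
      and n1: "\<not> sublist u1 S" and t2: "sublist (tl u2) S" for u1 u2
    proof (rule ccontr)
      assume ne: "u1 \<noteq> u2"
      obtain zs where "u2 = zs @ u1" using su by (auto simp: suffix_def)
      with ne have "zs \<noteq> []" by auto
      then have "tl u2 = tl zs @ u1" using \<open>u2 = zs @ u1\<close> by (cases zs) auto
      then have "sublist u1 (tl u2)" by auto
      then show False using t2 n1 sublist_order.order_trans by blast
    qed
    have "suffix (butlast w1) (butlast w2) \<or> suffix (butlast w2) (butlast w1)"
      using Bprops[OF that(1)] Bprops[OF that(2)] suffix_same_cases by blast
    then show ?thesis using key Bprops[OF that(1)] Bprops[OF that(2)] by metis
  qed
  have "inj_on last B"
  proof (rule inj_onI)
    fix x y assume "x \<in> B" "y \<in> B" "last x = last y"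
    then show "x = y" using Buniq[of x y] Bprops
      by (metis append_butlast_last_id)
  qed
  moreover have "last ` B \<subseteq> set ?S'"
  proof
    fix e assume "e \<in> last ` B"
    then obtain w where w: "w \<in> B" "e = last w" by auto
    have "tl w \<noteq> []"
    proof
      assume "tl w = []"
      then have "butlast w = []" using Bprops[OF w(1)] by (cases w) auto
      then show False using Bprops[OF w(1)] by auto
    qed
    then have "last w \<in> set (tl w)" by (metis last_in_set last_tl)
    then show "e \<in> set ?S'" using w Bprops[OF w(1)] set_mono_sublist by blast
  qed
  ultimately have "card B \<le> card (set ?S')"
    by (metis card_image card_mono finite_set)
  then have cB: "card B \<le> length S + 1" using card_length[of ?S'] by simp
  have Aprops: "w = butlast w @ [b] \<and> sublist (butlast w) S \<and> suffix (tl w) ?S' \<and> \<not> sublist w ?S'"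
    if w: "w \<in> A" for w
  proof -
    have "w \<noteq> []" using w Nil_notin_MAW unfolding A_def by blast
    have m: "set w \<subseteq> \<Sigma>" "\<not> sublist w ?S'" "sublist (butlast w) ?S'" "sublist (tl w) ?S'"
      using w MAW_char[OF \<open>w \<noteq> []\<close>] unfolding A_def by auto
    have bS: "sublist (butlast w) S" using w unfolding A_def by auto
    have "\<not> sublist w S" using m(2) by (auto simp: sublist_snoc)
    then have "\<not> sublist (tl w) S" using w bS m(1) MAW_char[OF \<open>w \<noteq> []\<close>, of \<Sigma> S] unfolding A_def by auto
    then have st: "suffix (tl w) ?S'" using m(4) by (auto simp: sublist_snoc)
    have "tl w \<noteq> []" using \<open>\<not> sublist (tl w) S\<close> by auto
    then obtain zs where "tl w = zs @ [b]" using st by auto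
    then have "last w = b" using \<open>tl w \<noteq> []\<close> by (metis last_snoc last_tl)
    then have "w = butlast w @ [b]" using \<open>w \<noteq> []\<close> by (metis append_butlast_last_id)
    then show ?thesis using bS st m by blast
  qed
  have qex: "\<exists>q. q \<le> length S \<and> suffix u (take q S)" if su: "sublist u S" for u
  proof -
    obtain p s where "S = p @ u @ s" using su by (auto simp: sublist_def)
    then show ?thesis by (intro exI[of _ "length p + length u"]) (auto simp: suffix_def)
  qed
  define q where "q w = (SOME q. q \<le> length S \<and> suffix (butlast w) (take q S))" for w
  have qprop: "q w \<le> length S \<and> suffix (butlast w) (take (q w) S)" if "w \<in> A" for w
    unfolding q_def using someI_ex[OF qex] Aprops[OF that] by blast
  have "inj_on q A"
  proof (rule inj_onI)
    fix w1 w2 assume w1: "w1 \<in> A" and w2: "w2 \<in> A" and qe: "q w1 = q w2"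
    have key: "u1 = u2" if su: "suffix u1 u2" and a1: "u1 @ [b] \<in> A" and a2: "u2 @ [b] \<in> A" for u1 u2
    proof (rule ccontr)
      assume ne: "u1 \<noteq> u2"
      obtain zs where "u2 = zs @ u1" using su by (auto simp: suffix_def)
      with ne have "zs \<noteq> []" by auto
      then have "tl (u2 @ [b]) = tl zs @ u1 @ [b]" using \<open>u2 = zs @ u1\<close> by (cases zs) auto
      then have "suffix (u1 @ [b]) (tl (u2 @ [b]))" by (auto simp: suffix_def)
      then have "suffix (u1 @ [b]) ?S'" using Aprops[OF a2] suffix_order.order_trans by blast
      then show False using Aprops[OF a1] by auto
    qed
    have "suffix (butlast w1) (butlast w2) \<or> suffix (butlast w2) (butlast w1)"
      using qprop[OF w1] qprop[OF w2] qe suffix_same_cases by metis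
    then have "butlast w1 = butlast w2"
      using key w1 w2 Aprops[OF w1] Aprops[OF w2] by metis
    then show "w1 = w2" using Aprops[OF w1] Aprops[OF w2] by metis
  qed
  moreover have "q ` A \<subseteq> {0..length S}" using qprop by auto
  ultimately have "card A \<le> card {0..length S}"
    by (metis card_image card_mono finite_atLeastAtMost)
  then have cA: "card A \<le> length S + 1" by simp
  have "card (symdiff (MAW \<Sigma> S) (MAW \<Sigma> ?S')) \<le> card D1 + (card A + card B)"
    unfolding sd by (meson add_le_mono card_Un_le le_refl order_trans)
  then show ?thesis using cD1 cA cB by linarith
qed

lemma cons_bound:
  assumes fin: "finite \<Sigma>"
  shows "card (symdiff (MAW \<Sigma> (a # S)) (MAW \<Sigma> S)) \<le> 3 * length S + 4"
proof -
  have "MAW \<Sigma> (a # S) = rev ` MAW \<Sigma> (rev S @ [a])"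
    using MAW_rev[of \<Sigma> "rev S @ [a]"] by simp
  moreover have "MAW \<Sigma> S = rev ` MAW \<Sigma> (rev S)"
    using MAW_rev[of \<Sigma> "rev S"] by simp
  ultimately have "card (symdiff (MAW \<Sigma> (a # S)) (MAW \<Sigma> S))
      = card (symdiff (MAW \<Sigma> (rev S)) (MAW \<Sigma> (rev S @ [a])))"
    using card_symdiff_image[of rev] symdiff_commute by (metis inj_def rev_rev_ident)
  then show ?thesis using snoc_bound[OF fin, of "rev S" a] by simp
qed


lemma card_symdiff_tri:
  assumes "finite X" "finite M" "finite Y"
  shows "card (symdiff X Y) \<le> card (symdiff X M) + card (symdiff M Y)"
proof -
  have "symdiff X Y \<subseteq> symdiff X M \<union> symdiff M Y" by (auto simp: symdiff_def)
  moreover have "finite (symdiff X M \<union> symdiff M Y)" using assms by (simp add: symdiff_def)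
  ultimately have "card (symdiff X Y) \<le> card (symdiff X M \<union> symdiff M Y)" by (rule card_mono[rotated])
  also have "\<dots> \<le> card (symdiff X M) + card (symdiff M Y)" by (rule card_Un_le)
  finally show ?thesis .
qed

lemma window_split:
  assumes "1 \<le> d" "i + d < length T"
  shows "take d (drop i T) = T!i # take (d-1) (drop (Suc i) T)"
    and "take d (drop (Suc i) T) = take (d-1) (drop (Suc i) T) @ [T!(i+d)]"
proof -
  have d: "d = Suc (d - 1)" using assms by simp
  have "drop i T = T!i # drop (Suc i) T" using assms by (simp add: Cons_nth_drop_Suc)
  then show "take d (drop i T) = T!i # take (d-1) (drop (Suc i) T)"
    by (subst d) simp
  have "d - 1 < length (drop (Suc i) T)" using assms by simp
  then have "take (Suc (d-1)) (drop (Suc i) T) = take (d-1) (drop (Suc i) T) @ [drop (Suc i) T ! (d-1)]"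
    by (rule take_Suc_conv_app_nth)
  moreover have "drop (Suc i) T ! (d-1) = T!(i+d)" using assms by simp
  ultimately show "take d (drop (Suc i) T) = take (d-1) (drop (Suc i) T) @ [T!(i+d)]"
    using d by metis
qed

lemma step_bound:
  assumes fin: "finite \<Sigma>" and "1 \<le> d" "i + d < length T"
  shows "card (symdiff (MAW \<Sigma> (take d (drop i T))) (MAW \<Sigma> (take d (drop (Suc i) T)))) \<le> 8 * d"
proof -
  define Z where "Z = take (d-1) (drop (Suc i) T)"
  have lz: "length Z = d - 1" using assms unfolding Z_def by simp
  have "card (symdiff (MAW \<Sigma> (T!i # Z)) (MAW \<Sigma> (Z @ [T!(i+d)])))
      \<le> card (symdiff (MAW \<Sigma> (T!i # Z)) (MAW \<Sigma> Z)) + card (symdiff (MAW \<Sigma> Z) (MAW \<Sigma> (Z @ [T!(i+d)])))"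
    using MAW_finite[OF fin] by (intro card_symdiff_tri) auto
  also have "\<dots> \<le> (3 * length Z + 4) + (3 * length Z + 4)"
    using cons_bound[OF fin] snoc_bound[OF fin] by (intro add_mono) auto
  also have "\<dots> \<le> 8 * d" using lz assms by simp
  finally show ?thesis using window_split[OF assms(2,3)] unfolding Z_def by simp
qed

lemma upper:
  assumes "finite \<Sigma>" "1 \<le> d" "d < length T"
  shows "real (S_MAW \<Sigma> T d) \<le> 8 * real d * real (length T - d)"
proof -
  have "S_MAW \<Sigma> T d \<le> (\<Sum>i<length T - d. 8 * d)"
    unfolding S_MAW_def
    by (rule sum_mono) (use step_bound[OF assms(1,2)] in auto)
  then have "S_MAW \<Sigma> T d \<le> (length T - d) * (8 * d)" by simp
  then have "real (S_MAW \<Sigma> T d) \<le> real ((length T - d) * (8 * d))" by linarith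
  then show ?thesis by (simp add: ac_simps)
qed

lemma mod_shift:
  assumes "(i + k) mod m = i mod (m::nat)" "k < m"
  shows "k = 0"
proof -
  have "m dvd (i + k - i)" using assms(1) mod_eq_dvd_iff_nat[of i "i+k" m] by simp
  then have "m dvd k" by simp
  then show ?thesis using assms(2) by (metis dvd_imp_le le_less_trans less_irrefl not_gr0)
qed

lemma lower:
  assumes fin: "finite \<Sigma>" and d1: "1 \<le> d" and dc: "d + 1 \<le> card \<Sigma>" and dn: "d < n"
  shows "\<exists>T'::nat list. set T' \<subseteq> \<Sigma> \<and> length T' = n \<and> 1 * real d * real (n - d) \<le> real (S_MAW \<Sigma> T' d)"
proof -
  obtain B where B: "B \<subseteq> \<Sigma>" "card B = d + 1" using obtain_subset_with_card_n[OF dc] by blast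
  have finB: "finite B" using B fin finite_subset by blast
  define L where "L = sorted_list_of_set B"
  have L: "distinct L" "length L = d + 1" "set L \<subseteq> \<Sigma>"
    using B finB unfolding L_def by auto
  define m where "m = d + 1"
  define T where "T = map (\<lambda>j. L ! (j mod m)) [0..<n]"
  have lT: "length T = n" unfolding T_def by simp
  have sT: "set T \<subseteq> \<Sigma>"
  proof
    fix x assume "x \<in> set T"
    then obtain j where "x = L ! (j mod m)" unfolding T_def by auto
    moreover have "j mod m < length L" using L(2) unfolding m_def by simp
    ultimately show "x \<in> \<Sigma>" using L(3) nth_mem by blast
  qed
  define W where "W i = take d (drop i T)" for i
  have lW: "length (W i) = d" if "i + d \<le> n" for i using that lT unfolding W_def by simp
  have nW: "W i ! j = L ! ((i + j) mod m)" if "i + d \<le> n" "j < d" for i j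
    using that lT unfolding W_def T_def by simp
  have m0: "0 < m" unfolding m_def by simp
  have Linj: "a = b" if "L ! a = L ! b" "a < m" "b < m" for a b
  proof -
    have "a < length L" "b < length L" using L(2) that(2,3) unfolding m_def by auto
    then show ?thesis using that(1) L(1) nth_eq_iff_index_eq by blast
  qed
  have modinj: "j = j'" if "(i + j) mod m = (i + j') mod m" "j < m" "j' < m" for i j j'
  proof (cases "j \<le> j'")
    case True
    then have "(i + j + (j' - j)) mod m = (i + j) mod m" using that(1) by simp
    then have "j' - j = 0" using mod_shift that(3) by fastforce
    then show ?thesis using True by simp
  next
    case False
    then have "(i + j' + (j - j')) mod m = (i + j') mod m" using that(1) by simp
    then have "j - j' = 0" using mod_shift that(2) by fastforce
    then show ?thesis using False by simp
  qed
  have distW: "distinct (W i)" if "i + d \<le> n" for i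
  proof (subst distinct_conv_nth, intro allI impI)
    fix j j' assume "j < length (W i)" "j' < length (W i)" "j \<noteq> j'"
    then have jj: "j < d" "j' < d" using lW[OF that] by auto
    show "W i ! j \<noteq> W i ! j'"
    proof
      assume "W i ! j = W i ! j'"
      then have "L ! ((i + j) mod m) = L ! ((i + j') mod m)" using nW[OF that] jj by simp
      then have e: "(i + j) mod m = (i + j') mod m" by (rule Linj) (simp_all add: m0)
      have "j < m" "j' < m" using jj unfolding m_def by auto
      then show False using modinj[OF e] \<open>j \<noteq> j'\<close> by blast
    qed
  qed
  have step: "d \<le> card (symdiff (MAW \<Sigma> (W i)) (MAW \<Sigma> (W (Suc i))))" if i: "i < n - d" for i
  proof -
    have i1: "i + d \<le> n" and i2: "Suc i + d \<le> n" using i by auto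
    define a where "a = W i ! 0"
    have aW: "a \<in> set (W i)" using lW[OF i1] d1 unfolding a_def by simp
    have a_not: "a \<notin> set (W (Suc i))"
    proof
      assume "a \<in> set (W (Suc i))"
      then obtain j where j: "j < d" "W (Suc i) ! j = a" using lW[OF i2] by (auto simp: in_set_conv_nth)
      then have "L ! ((i + Suc j) mod m) = L ! ((i + 0) mod m)"
        using nW[OF i2 j(1)] nW[OF i1, of 0] d1 unfolding a_def by simp
      then have e: "(i + Suc j) mod m = (i + 0) mod m" by (rule Linj) (simp_all add: m0)
      have "Suc j < m" using j(1) unfolding m_def by simp
      then have "Suc j = 0" using modinj[OF e _ m0] by blast
      then show False by simp
    qed
    have inM: "[x, a] \<in> MAW \<Sigma> (W i) - MAW \<Sigma> (W (Suc i))" if x: "x \<in> set (W i)" for x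
    proof
      have setW: "set (W i) \<subseteq> \<Sigma>" using sT unfolding W_def
        by (meson order_trans set_drop_subset set_take_subset)
      have ns: "\<not> sublist [x, a] (W i)"
      proof
        assume "sublist [x, a] (W i)"
        then obtain p s where ps: "W i = p @ [x, a] @ s" by (auto simp: sublist_def)
        then have "W i ! (Suc (length p)) = a" "Suc (length p) < length (W i)"
          by (simp_all add: nth_append)
        moreover have "0 < length (W i)" using lW[OF i1] d1 by simp
        ultimately have "Suc (length p) = 0"
          using distW[OF i1] nth_eq_iff_index_eq unfolding a_def by metis
        then show False by simp
      qed
      show "[x, a] \<in> MAW \<Sigma> (W i)"
        using MAW_char[of "[x,a]" \<Sigma> "W i"] ns x aW setW by (auto simp: sublist_single)
      show "[x, a] \<notin> MAW \<Sigma> (W (Suc i))"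
        using MAW_char[of "[x,a]" \<Sigma> "W (Suc i)"] a_not by (auto simp: sublist_single)
    qed
    have "d = card (set (W i))" using distinct_card[OF distW[OF i1]] lW[OF i1] by simp
    also have "\<dots> = card ((\<lambda>x. [x, a]) ` set (W i))" by (rule card_image[symmetric]) (auto simp: inj_on_def)
    also have "\<dots> \<le> card (symdiff (MAW \<Sigma> (W i)) (MAW \<Sigma> (W (Suc i))))"
      by (rule card_mono) (use MAW_finite[OF fin] inM in \<open>auto simp: symdiff_def\<close>)
    finally show ?thesis .
  qed
  have "(n - d) * d \<le> S_MAW \<Sigma> T d"
  proof -
    have "(n - d) * d = (\<Sum>i<n - d. d)" by simp
    also have "\<dots> \<le> S_MAW \<Sigma> T d" unfolding S_MAW_def lT
      by (rule sum_mono) (use step in \<open>simp add: W_def\<close>)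
    finally show ?thesis .
  qed
  then have "real ((n - d) * d) \<le> real (S_MAW \<Sigma> T d)" by linarith
  then have "1 * real d * real (n - d) \<le> real (S_MAW \<Sigma> T d)" by (simp add: mult.commute)
  then show ?thesis using sT lT by blast
qed

theorem lemma16:
  shows "(\<exists>C::real. \<forall>(\<Sigma>::nat set) (d::nat) (T::nat list).
            finite \<Sigma> \<and> 2 \<le> card \<Sigma> \<and> 1 \<le> d \<and> set T \<subseteq> \<Sigma> \<and> d < length T \<longrightarrow>
            real (S_MAW \<Sigma> T d) \<le> C * real d * real (length T - d))
       \<and> (\<exists>c::real. c > 0 \<and> (\<forall>(\<Sigma>::nat set) (d::nat) (n::nat).
            finite \<Sigma> \<and> 1 \<le> d \<and> d + 1 \<le> card \<Sigma> \<and> d < n \<longrightarrow>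
            (\<exists>T'::nat list. set T' \<subseteq> \<Sigma> \<and> length T' = n \<and>
               real (S_MAW \<Sigma> T' d) \<ge> c * real d * real (n - d))))"
proof
  show "\<exists>C::real. \<forall>(\<Sigma>::nat set) (d::nat) (T::nat list).
            finite \<Sigma> \<and> 2 \<le> card \<Sigma> \<and> 1 \<le> d \<and> set T \<subseteq> \<Sigma> \<and> d < length T \<longrightarrow>
            real (S_MAW \<Sigma> T d) \<le> C * real d * real (length T - d)"
    using upper by blast
  show "\<exists>c::real. c > 0 \<and> (\<forall>(\<Sigma>::nat set) (d::nat) (n::nat).
            finite \<Sigma> \<and> 1 \<le> d \<and> d + 1 \<le> card \<Sigma> \<and> d < n \<longrightarrow>
            (\<exists>T'::nat list. set T' \<subseteq> \<Sigma> \<and> length T' = n \<and>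
               real (S_MAW \<Sigma> T' d) \<ge> c * real d * real (n - d)))"
    by (rule exI[of _ 1]) (use lower in auto)
qed

end
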